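(* Let $G=(V,E)$ be a directed graph on $V=\{1,\dots,n\}$ in which every vertex has a self-loop and which is strongly connected; let $W$, $\pi$, $\sigma_W$, the norms $\|\cdot\|_\pi$, $\|\cdot\|_{\pi\otimes 1_d}$, the functions $f_i$, $f=\frac1n\sum_i f_i$, the constants $L,\beta,\gamma,\delta$, the minimizer $w_*$, and the gradient-push iterates $w(t),y(t),z(t)$ with stepsize $\alpha>0$ be as described in the context, and set $A_t=\|\bar w(t)-w_*\|$, $B_t=\|w(t)-n\pi\otimes\bar w(t)\|_{\pi\otimes 1_d}$. Assume (F1) and (F2). Let $b=\frac{n\gamma}{4L\delta}$ and assume $$\alpha\le \frac{2}{L+\beta}\quad\text{and}\quad \alpha<\frac{b(1-\sigma_W)}{L\sigma_W\big(\delta b+\delta\|1_n-n\pi\|_\pi+\sqrt{\sum_{j=1}^n 1/\pi_j}\big)}.$$ Then $\sup_{t\ge0}A_t<\infty$ and $\sup_{t\ge0}B_t<\infty$. More precisely, let $t_0\in\mathbb N$ be such that $(L\delta/n)\|1_n-n\pi\|_\pi\sigma_W^{t_0}\le\gamma/2$, let $\mathbf D_2=L\delta\|1_n-n\pi\|_\pi\|w_*\|+\|\nabla F(1_n\otimes w_* )\|_{\pi\otimes 1_d}$, and define $$R=\max\Big\{A_{t_0},\ \frac{B_{t_0}}{b},\ 2\|w_*\|,\ \frac{\sigma_W\alpha\mathbf D_2}{b(1-\sigma_W)-\alpha L\sigma_W\big(\delta b+\delta\|1_n-n\pi\|_\pi+\sqrt{\sum_{j=1}^n 1/\pi_j}\big)}\Big\}.$$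 Then $A_t\le R$ and $B_t\le bR$ for all $t\ge t_0$.
   Context: Graph and weights: $G=(V,E)$ directed, $V=\{1,\dots,n\}$, $(i,i)\in E$ for all $i$, and $G$ strongly connected. Let $d_j=|\{i:(j,i)\in E\}|$ and $W_{ij}=1/d_j$ if $(j,i)\in E$, $W_{ij}=0$ otherwise ($W$ is column stochastic and primitive). Let $\pi\in\mathbb R^n$ be the vector with $W\pi=\pi$, $\pi_i>0$, $\sum_i\pi_i=1$, and $W^\infty=\pi 1_n^\top$. For $x\in\mathbb R^n$, $\|x\|_\pi=(\sum_i x_i^2/\pi_i)^{1/2}$, $|||A|||_\pi$ is the induced operator norm, and $\sigma_W:=|||W-W^\infty|||_\pi$ (known to satisfy $\sigma_W<1$). For $x=\mathrm{col}(x_1,\dots,x_n)\in\mathbb R^{nd}$, $x_i\in\mathbb R^d$, $\|x\|_{\pi\otimes1_d}=(\sum_i\|x_i\|^2/\pi_i)^{1/2}$; $\|\cdot\|$ is the Euclidean norm. For $v\in\mathbb R^n$, $u\in\mathbb R^d$, $v\otimes u=\mathrm{col}(v_1u,\dots,v_nu)$. Costs: $f_i:\mathbb R^d\to\mathbb R$, $f=\frac1n\sum_{i=1}^n f_i$. (F1): each $\nabla f_i$ is Lipschitz with constant $L_i>0$; $L:=\max_i L_i$. (F2): $f$ is $\beta$-strongly convex, $\beta>0$. $w_*$ is the unique minimizer of $f$. $\gamma=\frac{\beta L}{\beta+L}$. $\nabla F(x)=\mathrm{col}(\nabla f_1(x_1),\dots,\nabla f_n(x_n))$. Gradient-push algorithm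 with stepsize $\alpha>0$: given $w(0)\in\mathbb R^{nd}$ and $y(0)=1_n$, for $t\ge0$: $z_i(t)=w_i(t)/y_i(t)$, $x_i(t)=w_i(t)-\alpha\nabla f_i(z_i(t))$, $w_i(t+1)=\sum_j W_{ij}x_j(t)$, $y_i(t+1)=\sum_jW_{ij}y_j(t)$ (all $y_i(t)>0$). $\bar w(t)=\frac1n\sum_i w_i(t)$. $\delta:=\sup_{t\ge0}\max_i 1/y_i(t)$ (finite). *)

theory Defs
  imports "HOL-Analysis.Analysis"
begin

text \<open>Vertices are 1..n; vectors in R^n are functions nat => real (only entries 1..n matter);
  stacked vectors in R^(nd) are functions nat => 'a with 'a a Euclidean space (R^d).\<close>

definition out_deg :: "(nat \<times> nat) set \<Rightarrow> nat \<Rightarrow> nat" where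
  "out_deg E j = card {i. (j, i) \<in> E}"

definition Wmat :: "(nat \<times> nat) set \<Rightarrow> nat \<Rightarrow> nat \<Rightarrow> real" where
  "Wmat E i j = (if (j, i) \<in> E then 1 / real (out_deg E j) else 0)"

definition strongly_connected_on :: "nat \<Rightarrow> (nat \<times> nat) set \<Rightarrow> bool" where
  "strongly_connected_on n E \<longleftrightarrow> (\<forall>i\<in>{1..n}. \<forall>j\<in>{1..n}. (i, j) \<in> E\<^sup>*)"

definition pi_norm :: "nat \<Rightarrow> (nat \<Rightarrow> real) \<Rightarrow> (nat \<Rightarrow> real) \<Rightarrow> real" where
  "pi_norm n p x = sqrt (\<Sum>i\<in>{1..n}. (x i)\<^sup>2 / p i)"

definition pi_block_norm :: "nat \<Rightarrow> (nat \<Rightarrow> real) \<Rightarrow> (nat \<Rightarrow> 'a::real_normed_vector) \<Rightarrow> real" where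
  "pi_block_norm n p x = sqrt (\<Sum>i\<in>{1..n}. (norm (x i))\<^sup>2 / p i)"

definition mat_vec :: "nat \<Rightarrow> (nat \<Rightarrow> nat \<Rightarrow> real) \<Rightarrow> (nat \<Rightarrow> real) \<Rightarrow> (nat \<Rightarrow> real)" where
  "mat_vec n M x = (\<lambda>i. \<Sum>j\<in>{1..n}. M i j * x j)"

definition pi_op_norm :: "nat \<Rightarrow> (nat \<Rightarrow> real) \<Rightarrow> (nat \<Rightarrow> nat \<Rightarrow> real) \<Rightarrow> real" where
  "pi_op_norm n p M = (SUP x\<in>{x. pi_norm n p x \<noteq> 0}. pi_norm n p (mat_vec n M x) / pi_norm n p x)"

text \<open>sigma_W = ||| W - W^infty |||_pi with W^infty = pi 1^T.\<close>
definition sigmaW :: "nat \<Rightarrow> (nat \<times> nat) set \<Rightarrow> (nat \<Rightarrow> real) \<Rightarrow> real" where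
  "sigmaW n E p = pi_op_norm n p (\<lambda>i j. Wmat E i j - p i)"

definition strongly_convex :: "real \<Rightarrow> ('a::real_normed_vector \<Rightarrow> real) \<Rightarrow> bool" where
  "strongly_convex \<beta> f \<longleftrightarrow> (\<forall>x y. \<forall>t::real. 0 \<le> t \<and> t \<le> 1 \<longrightarrow>
      f (t *\<^sub>R x + (1 - t) *\<^sub>R y) \<le> t * f x + (1 - t) * f y - \<beta> / 2 * t * (1 - t) * (norm (x - y))\<^sup>2)"

end

theory Submission
  imports Defs
begin



lemma line_deriv:
  fixes f :: "'a::real_inner \<Rightarrow> real"
  assumes d: "\<And>x. (f has_derivative (\<lambda>h. G x \<bullet> h)) (at x)"
  shows "((\<lambda>t. f (x + t *\<^sub>R v)) has_real_derivative (G (x + t *\<^sub>R v) \<bullet> v)) (at t)"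
proof -
  have l: "((\<lambda>t. x + t *\<^sub>R v) has_derivative (\<lambda>s. s *\<^sub>R v)) (at t)"
    by (auto intro!: derivative_eq_intros)
  have "((\<lambda>t. f (x + t *\<^sub>R v)) has_derivative (\<lambda>s. G (x + t *\<^sub>R v) \<bullet> (s *\<^sub>R v))) (at t)"
    using has_derivative_compose[OF l d] by simp
  moreover have "(\<lambda>s. G (x + t *\<^sub>R v) \<bullet> (s *\<^sub>R v)) = (*) (G (x + t *\<^sub>R v) \<bullet> v)"
    by (auto simp: mult.commute)
  ultimately show ?thesis unfolding has_field_derivative_def by simp
qed

lemma descent:
  fixes f :: "'a::real_inner \<Rightarrow> real"
  assumes d: "\<And>x. (f has_derivative (\<lambda>h. G x \<bullet> h)) (at x)"
    and lip: "\<And>x y. norm (G x - G y) \<le> L * norm (x - y)"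
  shows "f y \<le> f x + G x \<bullet> (y - x) + L / 2 * (norm (y - x))\<^sup>2"
proof -
  define v where "v = y - x"
  define h where "h = (\<lambda>t. f (x + t *\<^sub>R v) - t * (G x \<bullet> v) - L / 2 * t\<^sup>2 * (norm v)\<^sup>2)"
  have hd: "(h has_real_derivative (G (x + t *\<^sub>R v) \<bullet> v - G x \<bullet> v - L * t * (norm v)\<^sup>2)) (at t)" for t
  proof -
    have a: "((\<lambda>t. t * (G x \<bullet> v)) has_real_derivative (G x \<bullet> v)) (at t)"
      by (auto intro!: derivative_eq_intros)
    have b: "((\<lambda>t. L / 2 * t\<^sup>2 * (norm v)\<^sup>2) has_real_derivative (L * t * (norm v)\<^sup>2)) (at t)"
      by (auto intro!: derivative_eq_intros)
    show ?thesis unfolding h_def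
      by (rule DERIV_diff[OF DERIV_diff[OF line_deriv[OF d] a] b])
  qed
  obtain z where z: "0 < z" "z < 1" "h 1 - h 0 = (1 - 0) * (G (x + z *\<^sub>R v) \<bullet> v - G x \<bullet> v - L * z * (norm v)\<^sup>2)"
    using MVT2[of 0 1 h, OF _ hd] by auto
  have "G (x + z *\<^sub>R v) \<bullet> v - G x \<bullet> v = (G (x + z *\<^sub>R v) - G x) \<bullet> v" by (simp add: inner_diff_left)
  also have "\<dots> \<le> norm (G (x + z *\<^sub>R v) - G x) * norm v" by (rule norm_cauchy_schwarz)
  also have "\<dots> \<le> (L * norm (z *\<^sub>R v)) * norm v"
    using lip[of "x + z *\<^sub>R v" x] by (intro mult_right_mono) auto
  also have "\<dots> = L * z * (norm v)\<^sup>2" using z by (simp add: power2_eq_square)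
  finally have "h 1 \<le> h 0" using z by simp
  then show ?thesis unfolding h_def v_def by (simp add: algebra_simps)
qed

lemma sc_lower:
  fixes f :: "'a::real_inner \<Rightarrow> real"
  assumes d: "\<And>x. (f has_derivative (\<lambda>h. G x \<bullet> h)) (at x)"
    and sc: "strongly_convex \<beta> f"
  shows "f y + G y \<bullet> (x - y) + \<beta> / 2 * (norm (x - y))\<^sup>2 \<le> f x"
proof -
  define v where "v = x - y"
  define k where "k = (\<lambda>t. f (y + t *\<^sub>R v))"
  have kd: "(k has_real_derivative (G y \<bullet> v)) (at 0 within {0<..})"
    using line_deriv[OF d, of y v 0] unfolding k_def
    by (simp add: has_field_derivative_at_within)
  hence lim: "((\<lambda>t. (k t - k 0) / (t - 0)) \<longlongrightarrow> G y \<bullet> v) (at_right 0)"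
    by (simp add: has_field_derivative_iff)
  have lim2: "((\<lambda>t. f x - f y - \<beta> / 2 * (1 - t) * (norm v)\<^sup>2) \<longlongrightarrow> f x - f y - \<beta> / 2 * (1 - 0) * (norm v)\<^sup>2) (at_right 0)"
    by (intro tendsto_intros)
  have ev: "eventually (\<lambda>t. (k t - k 0) / (t - 0) \<le> f x - f y - \<beta> / 2 * (1 - t) * (norm v)\<^sup>2) (at_right 0)"
  proof -
    have "eventually (\<lambda>t::real. t < 1) (at_right 0)" unfolding eventually_at_right_field by (intro exI[of _ 1]) auto
    moreover have "eventually (\<lambda>t::real. 0 < t) (at_right 0)" by (simp add: eventually_at_right_less)
    ultimately show ?thesis
    proof eventually_elim
      case (elim t)
      have eq: "y + t *\<^sub>R v = t *\<^sub>R x + (1 - t) *\<^sub>R y" unfolding v_def by (simp add: algebra_simps)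
      have "k t \<le> t * f x + (1 - t) * f y - \<beta> / 2 * t * (1 - t) * (norm (x - y))\<^sup>2"
        using sc elim unfolding strongly_convex_def k_def eq by auto
      hence "k t - k 0 \<le> t * (f x - f y - \<beta> / 2 * (1 - t) * (norm v)\<^sup>2)"
        unfolding k_def v_def by (simp add: algebra_simps)
      thus ?case using elim by (simp add: divide_simps mult.commute)
    qed
  qed
  have "G y \<bullet> v \<le> f x - f y - \<beta> / 2 * (1 - 0) * (norm v)\<^sup>2"
    by (rule tendsto_le[OF _ lim2 lim ev]) simp
  thus ?thesis unfolding v_def by simp
qed




lemma coco_step1:
  fixes f :: "'a::real_inner \<Rightarrow> real"
  assumes UB: "\<And>x y. f y \<le> f x + G x \<bullet> (y - x) + L / 2 * (norm (y - x))\<^sup>2"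
    and LB: "\<And>x y. f y + G y \<bullet> (x - y) + \<beta> / 2 * (norm (x - y))\<^sup>2 \<le> f x"
    and s: "s > 0"
  shows "s * (norm (G y - G x - \<beta> *\<^sub>R (y - x)))\<^sup>2 - (L - \<beta>) * s\<^sup>2 / 2 * (norm (G y - G x - \<beta> *\<^sub>R (y - x)))\<^sup>2
     \<le> f y - f x - G x \<bullet> (y - x) - \<beta> / 2 * (norm (y - x))\<^sup>2"
proof -
  define u where "u = G y - G x - \<beta> *\<^sub>R (y - x)"
  define z where "z = y - s *\<^sub>R u"
  have 1: "f x + G x \<bullet> (z - x) + \<beta> / 2 * (norm (z - x))\<^sup>2 \<le> f z" using LB[of z x] LB[of x z] by simp
  have 2: "f z \<le> f y + G y \<bullet> (z - y) + L / 2 * (norm (z - y))\<^sup>2" using UB[of y z] UB[of z y] by simp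
  have gy: "G y = G x + u + \<beta> *\<^sub>R (y - x)" unfolding u_def by simp
  have e1: "z - x = (y - x) - s *\<^sub>R u" unfolding z_def by simp
  have e2: "z - y = - (s *\<^sub>R u)" unfolding z_def by simp
  have n1: "(norm (z - x))\<^sup>2 = (norm (y - x))\<^sup>2 - 2 * s * ((y - x) \<bullet> u) + s\<^sup>2 * (norm u)\<^sup>2"
    unfolding e1 power2_norm_eq_inner by (simp add: inner_simps algebra_simps power2_eq_square inner_commute)
  have n2: "(norm (z - y))\<^sup>2 = s\<^sup>2 * (norm u)\<^sup>2" unfolding e2 by (simp add: power_mult_distrib)
  have i1: "G x \<bullet> (z - x) = G x \<bullet> (y - x) - s * (G x \<bullet> u)" unfolding e1 by (simp add: inner_simps)
  have i2: "G y \<bullet> (z - y) = - s * (G x \<bullet> u) - s * (norm u)\<^sup>2 - s * \<beta> * ((y - x) \<bullet> u)"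
    unfolding e2 gy by (simp add: inner_simps power2_norm_eq_inner algebra_simps)
  have "f x + G x \<bullet> (y - x) - s * (G x \<bullet> u) + \<beta> / 2 * ((norm (y - x))\<^sup>2 - 2 * s * ((y - x) \<bullet> u) + s\<^sup>2 * (norm u)\<^sup>2)
     \<le> f y - s * (G x \<bullet> u) - s * (norm u)\<^sup>2 - s * \<beta> * ((y - x) \<bullet> u) + L / 2 * (s\<^sup>2 * (norm u)\<^sup>2)"
    using 1 2 unfolding n1 n2 i1 i2 by linarith
  thus ?thesis unfolding u_def[symmetric] by (simp add: algebra_simps diff_divide_distrib)
qed

lemma coco_step2:
  fixes K q M :: real
  assumes "\<And>s. s > 0 \<Longrightarrow> s * q - M * s\<^sup>2 / 2 * q \<le> K" and "M \<ge> 0" and "q \<ge> 0"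
  shows "q \<le> 2 * M * K"
proof (cases "M > 0")
  case True
  have "1 / M * q - M * (1 / M)\<^sup>2 / 2 * q \<le> K" using assms(1)[of "1/M"] True by simp
  hence "q / (2 * M) \<le> K" using True by (simp add: power2_eq_square field_simps)
  thus ?thesis using True by (simp add: field_simps)
next
  case False
  hence M: "M = 0" using assms by simp
  have "q = 0"
  proof (rule ccontr)
    assume "q \<noteq> 0"
    hence qp: "q > 0" using assms by simp
    have K0: "0 \<le> K" using assms(1)[of 1] M qp by simp
    have "(K + 1) / q * q \<le> K" using assms(1)[of "(K+1)/q"] M qp K0 by simp
    thus False using qp by simp
  qed
  thus ?thesis using M by simp
qed

lemma beta_le_L:
  fixes f :: "'a::euclidean_space \<Rightarrow> real"
  assumes UB: "\<And>x y. f y \<le> f x + G x \<bullet> (y - x) + L / 2 * (norm (y - x))\<^sup>2"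
    and LB: "\<And>x y. f y + G y \<bullet> (x - y) + \<beta> / 2 * (norm (x - y))\<^sup>2 \<le> f x"
  shows "\<beta> \<le> L"
proof -
  obtain v :: 'a where v: "v \<noteq> 0" using nonzero_Basis by blast
  have "\<beta> / 2 * (norm v)\<^sup>2 \<le> L / 2 * (norm v)\<^sup>2"
    using UB[of 0 v] LB[of v 0] by simp
  thus ?thesis using v by simp
qed

lemma cocoercive:
  fixes f :: "'a::euclidean_space \<Rightarrow> real"
  assumes UB: "\<And>x y. f y \<le> f x + G x \<bullet> (y - x) + L / 2 * (norm (y - x))\<^sup>2"
    and LB: "\<And>x y. f y + G y \<bullet> (x - y) + \<beta> / 2 * (norm (x - y))\<^sup>2 \<le> f x"
  shows "(norm (G x - G y))\<^sup>2 + L * \<beta> * (norm (x - y))\<^sup>2 \<le> (L + \<beta>) * ((G x - G y) \<bullet> (x - y))"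
proof -
  have M: "L - \<beta> \<ge> 0" using beta_le_L[OF UB LB] by simp
  have a: "(norm (G y - G x - \<beta> *\<^sub>R (y - x)))\<^sup>2 \<le> 2 * (L - \<beta>) * (f y - f x - G x \<bullet> (y - x) - \<beta> / 2 * (norm (y - x))\<^sup>2)"
    by (rule coco_step2[OF _ M]) (use coco_step1[OF UB LB] in auto)
  have b: "(norm (G x - G y - \<beta> *\<^sub>R (x - y)))\<^sup>2 \<le> 2 * (L - \<beta>) * (f x - f y - G y \<bullet> (x - y) - \<beta> / 2 * (norm (x - y))\<^sup>2)"
    by (rule coco_step2[OF _ M]) (use coco_step1[OF UB LB] in auto)
  have nn: "norm (G y - G x - \<beta> *\<^sub>R (y - x)) = norm (G x - G y - \<beta> *\<^sub>R (x - y))"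
  proof -
    have "G y - G x - \<beta> *\<^sub>R (y - x) = - (G x - G y - \<beta> *\<^sub>R (x - y))" by (simp add: algebra_simps)
    thus ?thesis by (metis norm_minus_cancel)
  qed
  have nxy: "norm (y - x) = norm (x - y)" by (rule norm_minus_commute)
  have "2 * (norm (G x - G y - \<beta> *\<^sub>R (x - y)))\<^sup>2 \<le> 2 * (L - \<beta>) * ((G x - G y) \<bullet> (x - y) - \<beta> * (norm (x - y))\<^sup>2)"
  proof -
    have "G x \<bullet> (y - x) + G y \<bullet> (x - y) = - ((G x - G y) \<bullet> (x - y))" by (simp add: inner_simps)
    hence sum: "(f y - f x - G x \<bullet> (y - x) - \<beta> / 2 * (norm (x - y))\<^sup>2) + (f x - f y - G y \<bullet> (x - y) - \<beta> / 2 * (norm (x - y))\<^sup>2)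
       = (G x - G y) \<bullet> (x - y) - \<beta> * (norm (x - y))\<^sup>2" by (simp add: algebra_simps)
    have "2 * (norm (G x - G y - \<beta> *\<^sub>R (x - y)))\<^sup>2 \<le> 2 * (L - \<beta>) * ((f y - f x - G x \<bullet> (y - x) - \<beta> / 2 * (norm (x - y))\<^sup>2) + (f x - f y - G y \<bullet> (x - y) - \<beta> / 2 * (norm (x - y))\<^sup>2))"
    proof -
      have "2 * (norm (G x - G y - \<beta> *\<^sub>R (x - y)))\<^sup>2 \<le> 2 * (L - \<beta>) * (f y - f x - G x \<bullet> (y - x) - \<beta> / 2 * (norm (x - y))\<^sup>2) + 2 * (L - \<beta>) * (f x - f y - G y \<bullet> (x - y) - \<beta> / 2 * (norm (x - y))\<^sup>2)"
        using a b unfolding nn nxy by linarith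
      thus ?thesis by (simp only: distrib_left)
    qed
    thus ?thesis unfolding sum by simp
  qed
  moreover have "(norm (G x - G y - \<beta> *\<^sub>R (x - y)))\<^sup>2 = (norm (G x - G y))\<^sup>2 - 2 * \<beta> * ((G x - G y) \<bullet> (x - y)) + \<beta>\<^sup>2 * (norm (x - y))\<^sup>2"
    unfolding power2_norm_eq_inner by (simp add: inner_simps algebra_simps power2_eq_square inner_commute)
  ultimately show ?thesis by (simp add: algebra_simps power2_eq_square)
qed


lemma grad_zero:
  fixes f :: "'a::real_inner \<Rightarrow> real"
  assumes UB: "\<And>x y. f y \<le> f x + G x \<bullet> (y - x) + L / 2 * (norm (y - x))\<^sup>2"
    and L: "L > 0" and mn: "\<And>x. f w \<le> f x"
  shows "G w = 0"
proof -
  have "f w \<le> f (w - (1 / L) *\<^sub>R G w)" by (rule mn)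
  also have "\<dots> \<le> f w + G w \<bullet> (- ((1 / L) *\<^sub>R G w)) + L / 2 * (norm (- ((1 / L) *\<^sub>R G w)))\<^sup>2"
    using UB[of w "w - (1 / L) *\<^sub>R G w"] UB[of "w - (1 / L) *\<^sub>R G w" w] by simp
  also have "\<dots> = f w - (norm (G w))\<^sup>2 / (2 * L)"
    using L by (simp add: power2_norm_eq_inner[symmetric] power_mult_distrib power2_eq_square field_simps)
  finally have "(norm (G w))\<^sup>2 / (2 * L) \<le> 0" by simp
  hence "(norm (G w))\<^sup>2 \<le> 0" using L by (simp add: divide_le_0_iff)
  thus ?thesis by simp
qed

lemma contraction:
  fixes f :: "'a::euclidean_space \<Rightarrow> real"
  assumes UB: "\<And>x y. f y \<le> f x + G x \<bullet> (y - x) + L / 2 * (norm (y - x))\<^sup>2"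
    and LB: "\<And>x y. f y + G y \<bullet> (x - y) + \<beta> / 2 * (norm (x - y))\<^sup>2 \<le> f x"
    and bp: "\<beta> > 0" and ap: "\<alpha> > 0" and ale: "\<alpha> \<le> 2 / (L + \<beta>)" and Gw: "G w = 0"
  shows "norm (x - \<alpha> *\<^sub>R G x - w) \<le> (1 - \<alpha> * (\<beta> * L / (\<beta> + L))) * norm (x - w)"
proof -
  have Lb: "\<beta> \<le> L" by (rule beta_le_L[OF UB LB])
  define a where "a = x - w"
  define g where "g = G x"
  define \<gamma> where "\<gamma> = \<beta> * L / (\<beta> + L)"
  have co: "(norm g)\<^sup>2 + L * \<beta> * (norm a)\<^sup>2 \<le> (L + \<beta>) * (g \<bullet> a)"
    using cocoercive[OF UB LB, of x w] Gw unfolding a_def g_def by simp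
  have LBp: "L + \<beta> > 0" using bp Lb by simp
  have ga: "g \<bullet> a \<ge> ((norm g)\<^sup>2 + L * \<beta> * (norm a)\<^sup>2) / (L + \<beta>)"
    using co LBp by (simp add: field_simps)
  have "(norm (a - \<alpha> *\<^sub>R g))\<^sup>2 = (norm a)\<^sup>2 - 2 * \<alpha> * (g \<bullet> a) + \<alpha>\<^sup>2 * (norm g)\<^sup>2"
    unfolding power2_norm_eq_inner by (simp add: inner_simps algebra_simps power2_eq_square inner_commute)
  also have "\<dots> \<le> (norm a)\<^sup>2 - 2 * \<alpha> * (((norm g)\<^sup>2 + L * \<beta> * (norm a)\<^sup>2) / (L + \<beta>)) + \<alpha>\<^sup>2 * (norm g)\<^sup>2"
    using mult_left_mono[OF ga, of "2 * \<alpha>"] ap by simp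
  also have "\<dots> = (1 - 2 * \<alpha> * \<gamma>) * (norm a)\<^sup>2 + \<alpha> * (\<alpha> - 2 / (L + \<beta>)) * (norm g)\<^sup>2"
  proof -
    have hg: "\<gamma> = \<beta> * L / (L + \<beta>)" unfolding \<gamma>_def by (simp add: add.commute)
    have gen: "\<And>K na ng::real. K \<noteq> 0 \<Longrightarrow> na - 2 * \<alpha> * ((ng + L * \<beta> * na) / K) + \<alpha>\<^sup>2 * ng
       = (1 - 2 * \<alpha> * (\<beta> * L / K)) * na + \<alpha> * (\<alpha> - 2 / K) * ng"
      by (simp add: field_simps power2_eq_square)
    show ?thesis unfolding hg using LBp by (intro gen) simp
  qed
  also have "\<dots> \<le> (1 - 2 * \<alpha> * \<gamma>) * (norm a)\<^sup>2"
  proof -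
    have "\<alpha> * (\<alpha> - 2 / (L + \<beta>)) * (norm g)\<^sup>2 \<le> 0"
      using ap ale by (intro mult_nonpos_nonneg mult_nonneg_nonpos) auto
    thus ?thesis by simp
  qed
  also have "\<dots> \<le> (1 - \<alpha> * \<gamma>)\<^sup>2 * (norm a)\<^sup>2"
  proof (intro mult_right_mono)
    have "(1 - \<alpha> * \<gamma>)\<^sup>2 = 1 - 2 * \<alpha> * \<gamma> + (\<alpha> * \<gamma>)\<^sup>2" by (simp add: power2_eq_square algebra_simps)
    moreover have "0 \<le> (\<alpha> * \<gamma>)\<^sup>2" by simp
    ultimately show "1 - 2 * \<alpha> * \<gamma> \<le> (1 - \<alpha> * \<gamma>)\<^sup>2" by linarith
  qed simp
  finally have sq: "(norm (a - \<alpha> *\<^sub>R g))\<^sup>2 \<le> ((1 - \<alpha> * \<gamma>) * norm a)\<^sup>2"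
    by (simp add: power_mult_distrib)
  have gpos: "\<gamma> \<le> (L + \<beta>) / 4"
  proof -
    have "4 * (\<beta> * L) \<le> (L + \<beta>) * (\<beta> + L)" 
    proof -
      have "(L + \<beta>) * (\<beta> + L) - 4 * (\<beta> * L) = (L - \<beta>)\<^sup>2" by (simp add: power2_eq_square algebra_simps)
      moreover have "0 \<le> (L - \<beta>)\<^sup>2" by simp
      ultimately show ?thesis by linarith
    qed
    thus ?thesis unfolding \<gamma>_def using LBp by (simp add: field_simps)
  qed
  have "\<alpha> * \<gamma> \<le> 2 / (L + \<beta>) * ((L + \<beta>) / 4)"
    using ale gpos ap bp Lb unfolding \<gamma>_def by (intro mult_mono) auto
  moreover have "2 / (L + \<beta>) * ((L + \<beta>) / 4) = 1/2" using LBp by (simp add: field_simps)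
  ultimately have "\<alpha> * \<gamma> \<le> 1/2" by linarith
  hence nn: "0 \<le> (1 - \<alpha> * \<gamma>) * norm a" by simp
  have "norm (a - \<alpha> *\<^sub>R g) \<le> (1 - \<alpha> * \<gamma>) * norm a"
    by (rule power2_le_imp_le[OF sq nn])
  thus ?thesis unfolding a_def g_def \<gamma>_def by (simp add: algebra_simps)
qed





lemma pi_norm_L2:
  assumes "\<forall>i\<in>{1..n}. p i > 0"
  shows "pi_norm n p x = L2_set (\<lambda>i. x i / sqrt (p i)) {1..n}"
  unfolding pi_norm_def L2_set_def
  using assms by (intro arg_cong[where f=sqrt] sum.cong) (auto simp: power_divide less_imp_le)

lemma pbn_L2:
  assumes "\<forall>i\<in>{1..n}. p i > 0"
  shows "pi_block_norm n p u = L2_set (\<lambda>i. norm (u i) / sqrt (p i)) {1..n}"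
  unfolding pi_block_norm_def L2_set_def
  using assms by (intro arg_cong[where f=sqrt] sum.cong) (auto simp: power_divide less_imp_le)

lemma pi_norm_nonneg: "\<forall>i\<in>{1..n}. p i > 0 \<Longrightarrow> pi_norm n p x \<ge> 0" unfolding pi_norm_def by (auto intro!: sum_nonneg)
lemma pbn_nonneg: "\<forall>i\<in>{1..n}. p i > 0 \<Longrightarrow> pi_block_norm n p x \<ge> 0" unfolding pi_block_norm_def by (auto intro!: sum_nonneg)

lemma pbn_le_pi_norm:
  assumes p: "\<forall>i\<in>{1..n}. p i > 0" and le: "\<forall>i\<in>{1..n}. norm (u i) \<le> a i"
  shows "pi_block_norm n p u \<le> pi_norm n p a"
  unfolding pbn_L2[OF p] pi_norm_L2[OF p]
proof (rule L2_set_mono)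
  fix i assume i: "i \<in> {1..n}"
  hence "p i > 0" "norm (u i) \<le> a i" using p le by auto
  thus "norm (u i) / sqrt (p i) \<le> a i / sqrt (p i)" "0 \<le> norm (u i) / sqrt (p i)"
    by (auto intro: divide_right_mono)
qed

lemma pi_norm_mono:
  assumes p: "\<forall>i\<in>{1..n}. p i > 0" and le: "\<forall>i\<in>{1..n}. 0 \<le> a i \<and> a i \<le> b i"
  shows "pi_norm n p a \<le> pi_norm n p b"
  unfolding pi_norm_L2[OF p]
proof (rule L2_set_mono)
  fix i assume i: "i \<in> {1..n}"
  hence "p i > 0" "0 \<le> a i" "a i \<le> b i" using p le by auto
  thus "a i / sqrt (p i) \<le> b i / sqrt (p i)" "0 \<le> a i / sqrt (p i)"
    by (auto intro: divide_right_mono)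
qed

lemma pi_norm_abs:
  "pi_norm n p (\<lambda>i. \<bar>a i\<bar>) = pi_norm n p a"
  unfolding pi_norm_def by simp

lemma pi_norm_add:
  assumes p: "\<forall>i\<in>{1..n}. p i > 0"
  shows "pi_norm n p (\<lambda>i. a i + b i) \<le> pi_norm n p a + pi_norm n p b"
  unfolding pi_norm_L2[OF p] by (simp add: add_divide_distrib L2_set_triangle_ineq)

lemma pi_norm_scale:
  assumes p: "\<forall>i\<in>{1..n}. p i > 0"
  shows "pi_norm n p (\<lambda>i. c * a i) = \<bar>c\<bar> * pi_norm n p a"
proof -
  have "pi_norm n p (\<lambda>i. c * a i) = pi_norm n p (\<lambda>i. \<bar>c\<bar> * \<bar>a i\<bar>)"
    unfolding pi_norm_def by (simp add: power_mult_distrib)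
  also have "\<dots> = \<bar>c\<bar> * pi_norm n p (\<lambda>i. \<bar>a i\<bar>)"
    unfolding pi_norm_L2[OF p] by (simp add: L2_set_right_distrib)
  finally show ?thesis by (simp add: pi_norm_abs)
qed

lemma pbn_const:
  assumes p: "\<forall>i\<in>{1..n}. p i > 0"
  shows "pi_block_norm n p (\<lambda>i. v) = norm v * sqrt (\<Sum>j\<in>{1..n}. 1 / p j)"
proof -
  have "(\<Sum>i\<in>{1..n}. (norm v)\<^sup>2 / p i) = (norm v)\<^sup>2 * (\<Sum>j\<in>{1..n}. 1 / p j)"
    by (simp add: sum_distrib_left)
  thus ?thesis unfolding pi_block_norm_def by (simp add: real_sqrt_mult)
qed

lemma sum_abs_le_pi_norm:
  assumes p: "\<forall>i\<in>{1..n}. p i > 0" and ps: "(\<Sum>i\<in>{1..n}. p i) = 1"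
  shows "(\<Sum>i\<in>{1..n}. \<bar>x i\<bar>) \<le> pi_norm n p x"
proof -
  have "(\<Sum>i\<in>{1..n}. \<bar>x i\<bar>) = (\<Sum>i\<in>{1..n}. \<bar>sqrt (p i)\<bar> * \<bar>x i / sqrt (p i)\<bar>)"
  proof (rule sum.cong)
    fix i assume "i \<in> {1..n}"
    hence "p i > 0" using p by auto
    thus "\<bar>x i\<bar> = \<bar>sqrt (p i)\<bar> * \<bar>x i / sqrt (p i)\<bar>" by (simp add: abs_div)
  qed simp
  also have "\<dots> \<le> L2_set (\<lambda>i. sqrt (p i)) {1..n} * L2_set (\<lambda>i. x i / sqrt (p i)) {1..n}"
    by (rule L2_set_mult_ineq)
  also have "L2_set (\<lambda>i. sqrt (p i)) {1..n} = 1"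
  proof -
    have "(\<Sum>i\<in>{1..n}. (sqrt (p i))\<^sup>2) = (\<Sum>i\<in>{1..n}. p i)"
    proof (rule sum.cong)
      fix i assume "i \<in> {1..n}"
      hence "p i > 0" using p by blast
      thus "(sqrt (p i))\<^sup>2 = p i" by simp
    qed simp
    thus ?thesis unfolding L2_set_def using ps by simp
  qed
  finally show ?thesis unfolding pi_norm_L2[OF p] by simp
qed

lemma op_bound:
  assumes p: "\<forall>i\<in>{1..n}. p i > 0"
  shows "pi_norm n p (mat_vec n M x) \<le> L2_set (\<lambda>i. L2_set (\<lambda>j. M i j * sqrt (p j)) {1..n} / sqrt (p i)) {1..n} * pi_norm n p x"
proof -
  have r: "\<bar>mat_vec n M x i\<bar> \<le> L2_set (\<lambda>j. M i j * sqrt (p j)) {1..n} * pi_norm n p x" for i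
  proof -
    have "mat_vec n M x i = (\<Sum>j\<in>{1..n}. (M i j * sqrt (p j)) * (x j / sqrt (p j)))"
      unfolding mat_vec_def
    proof (rule sum.cong)
      fix j assume "j \<in> {1..n}"
      hence "p j > 0" using p by auto
      thus "M i j * x j = M i j * sqrt (p j) * (x j / sqrt (p j))" by simp
    qed simp
    also have "\<bar>\<dots>\<bar> \<le> (\<Sum>j\<in>{1..n}. \<bar>M i j * sqrt (p j)\<bar> * \<bar>x j / sqrt (p j)\<bar>)"
      by (rule order_trans[OF sum_abs]) (simp only: abs_mult order_refl)
    also have "\<dots> \<le> L2_set (\<lambda>j. M i j * sqrt (p j)) {1..n} * L2_set (\<lambda>j. x j / sqrt (p j)) {1..n}"
      by (rule L2_set_mult_ineq)
    finally show ?thesis unfolding pi_norm_L2[OF p] .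
  qed
  have "pi_norm n p (mat_vec n M x) = L2_set (\<lambda>i. \<bar>mat_vec n M x i\<bar> / sqrt (p i)) {1..n}"
    unfolding pi_norm_L2[OF p] L2_set_def by (simp add: power_divide)
  also have "\<dots> \<le> L2_set (\<lambda>i. (L2_set (\<lambda>j. M i j * sqrt (p j)) {1..n} / sqrt (p i)) * pi_norm n p x) {1..n}"
  proof (rule L2_set_mono)
    fix i assume "i \<in> {1..n}"
    hence pi: "p i > 0" using p by blast
    show "\<bar>mat_vec n M x i\<bar> / sqrt (p i) \<le> L2_set (\<lambda>j. M i j * sqrt (p j)) {1..n} / sqrt (p i) * pi_norm n p x"
      using r[of i] pi by (simp add: divide_simps)
    show "0 \<le> \<bar>mat_vec n M x i\<bar> / sqrt (p i)" using pi by simp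
  qed
  also have "\<dots> = pi_norm n p x * L2_set (\<lambda>i. L2_set (\<lambda>j. M i j * sqrt (p j)) {1..n} / sqrt (p i)) {1..n}"
    by (subst L2_set_right_distrib[OF pi_norm_nonneg[OF p]]) (simp add: mult.commute)
  finally show ?thesis by (simp add: mult.commute)
qed

lemma op_norm_bound:
  assumes p: "\<forall>i\<in>{1..n}. p i > 0"
  shows "pi_norm n p (mat_vec n M x) \<le> pi_op_norm n p M * pi_norm n p x"
proof -
  define C where "C = L2_set (\<lambda>i. L2_set (\<lambda>j. M i j * sqrt (p j)) {1..n} / sqrt (p i)) {1..n}"
  have bdd: "bdd_above ((\<lambda>x. pi_norm n p (mat_vec n M x) / pi_norm n p x) ` {x. pi_norm n p x \<noteq> 0})"
  proof (rule bdd_aboveI2)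
    fix x assume "x \<in> {x. pi_norm n p x \<noteq> 0}"
    hence "pi_norm n p x > 0" using pi_norm_nonneg[OF p, of x] by simp
    thus "pi_norm n p (mat_vec n M x) / pi_norm n p x \<le> C"
      using op_bound[OF p, of M x] unfolding C_def by (simp add: divide_simps)
  qed
  show ?thesis
  proof (cases "pi_norm n p x = 0")
    case True
    thus ?thesis using op_bound[OF p, of M x] pi_norm_nonneg[OF p] by simp
  next
    case False
    hence pos: "pi_norm n p x > 0" using pi_norm_nonneg[OF p, of x] by simp
    have "pi_norm n p (mat_vec n M x) / pi_norm n p x \<le> pi_op_norm n p M"
      unfolding pi_op_norm_def using False by (intro cSUP_upper[OF _ bdd]) auto
    thus ?thesis using pos by (simp add: divide_simps)
  qed
qed

lemma op_norm_nonneg: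
  assumes p: "\<forall>i\<in>{1..n}. p i > 0" and n: "n \<ge> 1"
  shows "pi_op_norm n p M \<ge> 0"
proof -
  define C where "C = L2_set (\<lambda>i. L2_set (\<lambda>j. M i j * sqrt (p j)) {1..n} / sqrt (p i)) {1..n}"
  have bdd: "bdd_above ((\<lambda>x. pi_norm n p (mat_vec n M x) / pi_norm n p x) ` {x. pi_norm n p x \<noteq> 0})"
  proof (rule bdd_aboveI2)
    fix x assume "x \<in> {x. pi_norm n p x \<noteq> 0}"
    hence "pi_norm n p x > 0" using pi_norm_nonneg[OF p, of x] by simp
    thus "pi_norm n p (mat_vec n M x) / pi_norm n p x \<le> C"
      using op_bound[OF p, of M x] unfolding C_def by (simp add: divide_simps)
  qed
  define e where "e = (\<lambda>i::nat. 1::real)"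
  have "pi_norm n p e \<noteq> 0"
    unfolding pi_norm_def
  proof
    assume "sqrt (\<Sum>i\<in>{1..n}. (e i)\<^sup>2 / p i) = 0"
    hence "(\<Sum>i\<in>{1..n}. (e i)\<^sup>2 / p i) = 0" by simp
    moreover have "(\<Sum>i\<in>{1..n}. (e i)\<^sup>2 / p i) > 0"
      using p n unfolding e_def by (intro sum_pos) auto
    ultimately show False by simp
  qed
  hence "pi_norm n p (mat_vec n M e) / pi_norm n p e \<le> pi_op_norm n p M"
    unfolding pi_op_norm_def by (intro cSUP_upper[OF _ bdd]) auto
  moreover have "0 \<le> pi_norm n p (mat_vec n M e) / pi_norm n p e"
    using pi_norm_nonneg[OF p] by simp
  ultimately show ?thesis by linarith
qed


lemma pbn_add:
  assumes p: "\<forall>i\<in>{1..n}. p i > 0"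
  shows "pi_block_norm n p (\<lambda>i. u i + v i) \<le> pi_block_norm n p u + pi_block_norm n p v"
proof -
  have "pi_block_norm n p (\<lambda>i. u i + v i) \<le> L2_set (\<lambda>i. norm (u i) / sqrt (p i) + norm (v i) / sqrt (p i)) {1..n}"
    unfolding pbn_L2[OF p]
  proof (rule L2_set_mono)
    fix i assume "i \<in> {1..n}"
    hence pi: "p i > 0" using p by blast
    show "norm (u i + v i) / sqrt (p i) \<le> norm (u i) / sqrt (p i) + norm (v i) / sqrt (p i)"
      using pi norm_triangle_ineq[of "u i" "v i"] by (simp add: add_divide_distrib[symmetric] divide_right_mono)
    show "0 \<le> norm (u i + v i) / sqrt (p i)" using pi by simp
  qed
  also have "\<dots> \<le> pi_block_norm n p u + pi_block_norm n p v"
    unfolding pbn_L2[OF p] by (rule L2_set_triangle_ineq)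
  finally show ?thesis .
qed

lemma pbn_scale:
  assumes p: "\<forall>i\<in>{1..n}. p i > 0"
  shows "pi_block_norm n p (\<lambda>i. c *\<^sub>R u i) = \<bar>c\<bar> * pi_block_norm n p u"
  unfolding pbn_L2[OF p] by (simp add: L2_set_right_distrib)

lemma pbn_sq:
  fixes u :: "nat \<Rightarrow> 'a::euclidean_space"
  assumes p: "\<forall>i\<in>{1..n}. p i > 0"
  shows "(pi_block_norm n p u)\<^sup>2 = (\<Sum>b\<in>Basis. (pi_norm n p (\<lambda>i. u i \<bullet> b))\<^sup>2)"
proof -
  have nn: "0 \<le> (\<Sum>i\<in>{1..n}. (norm (u i))\<^sup>2 / p i)" using p by (auto intro!: sum_nonneg)
  have nn2: "0 \<le> (\<Sum>i\<in>{1..n}. (u i \<bullet> b)\<^sup>2 / p i)" for b using p by (auto intro!: sum_nonneg)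
  have "(pi_block_norm n p u)\<^sup>2 = (\<Sum>i\<in>{1..n}. (norm (u i))\<^sup>2 / p i)"
    unfolding pi_block_norm_def using nn by simp
  also have "\<dots> = (\<Sum>i\<in>{1..n}. \<Sum>b\<in>Basis. (u i \<bullet> b)\<^sup>2 / p i)"
  proof (rule sum.cong)
    fix i
    have "(norm (u i))\<^sup>2 = (\<Sum>b\<in>Basis. (u i \<bullet> b)\<^sup>2)"
      unfolding power2_norm_eq_inner by (subst euclidean_inner) (simp add: power2_eq_square)
    thus "(norm (u i))\<^sup>2 / p i = (\<Sum>b\<in>Basis. (u i \<bullet> b)\<^sup>2 / p i)" by (simp add: sum_divide_distrib)
  qed simp
  also have "\<dots> = (\<Sum>b\<in>Basis. \<Sum>i\<in>{1..n}. (u i \<bullet> b)\<^sup>2 / p i)" by (rule sum.swap)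
  also have "\<dots> = (\<Sum>b\<in>Basis. (pi_norm n p (\<lambda>i. u i \<bullet> b))\<^sup>2)"
    unfolding pi_norm_def using nn2 by simp
  finally show ?thesis .
qed

lemma block_op:
  fixes u :: "nat \<Rightarrow> 'a::euclidean_space"
  assumes p: "\<forall>i\<in>{1..n}. p i > 0" and n: "n \<ge> 1"
  shows "pi_block_norm n p (\<lambda>i. \<Sum>j\<in>{1..n}. M i j *\<^sub>R u j) \<le> pi_op_norm n p M * pi_block_norm n p u"
proof -
  define \<sigma> where "\<sigma> = pi_op_norm n p M"
  have s0: "\<sigma> \<ge> 0" unfolding \<sigma>_def by (rule op_norm_nonneg[OF p n])
  have coord: "(\<lambda>i. (\<Sum>j\<in>{1..n}. M i j *\<^sub>R u j) \<bullet> b) = mat_vec n M (\<lambda>j. u j \<bullet> b)" for b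
    unfolding mat_vec_def by (simp add: inner_sum_left)
  have "(pi_block_norm n p (\<lambda>i. \<Sum>j\<in>{1..n}. M i j *\<^sub>R u j))\<^sup>2 = (\<Sum>b\<in>Basis. (pi_norm n p (mat_vec n M (\<lambda>j. u j \<bullet> b)))\<^sup>2)"
    unfolding pbn_sq[OF p] coord ..
  also have "\<dots> \<le> (\<Sum>b\<in>Basis. (\<sigma> * pi_norm n p (\<lambda>j. u j \<bullet> b))\<^sup>2)"
    by (intro sum_mono power_mono) (auto simp: \<sigma>_def op_norm_bound[OF p] pi_norm_nonneg[OF p])
  also have "\<dots> = (\<sigma> * pi_block_norm n p u)\<^sup>2"
    unfolding power_mult_distrib pbn_sq[OF p] by (simp add: sum_distrib_left)
  finally have "(pi_block_norm n p (\<lambda>i. \<Sum>j\<in>{1..n}. M i j *\<^sub>R u j))\<^sup>2 \<le> (\<sigma> * pi_block_norm n p u)\<^sup>2" .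
  moreover have "0 \<le> \<sigma> * pi_block_norm n p u" by (intro mult_nonneg_nonneg s0 pbn_nonneg[OF p])
  ultimately show ?thesis unfolding \<sigma>_def by (rule power2_le_imp_le)
qed


lemma pi_norm_cong: "(\<forall>i\<in>{1..n}. x i = x' i) \<Longrightarrow> pi_norm n p x = pi_norm n p x'"
  unfolding pi_norm_def by (intro arg_cong[where f=sqrt] sum.cong) auto

lemma pbn_cong: "(\<forall>i\<in>{1..n}. x i = x' i) \<Longrightarrow> pi_block_norm n p x = pi_block_norm n p x'"
  unfolding pi_block_norm_def by (intro arg_cong[where f=sqrt] sum.cong) auto

lemma pbn_eq_pi_norm: "pi_block_norm n p u = pi_norm n p (\<lambda>i. norm (u i))"
  unfolding pi_block_norm_def pi_norm_def by simp





locale gpy =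
  fixes n :: nat and E :: "(nat \<times> nat) set" and y :: "nat \<Rightarrow> nat \<Rightarrow> real"
  assumes n_pos: "n \<ge> 1"
    and E_sub: "E \<subseteq> {1..n} \<times> {1..n}"
    and self_loops: "\<forall>i\<in>{1..n}. (i, i) \<in> E"
    and y0: "\<forall>i\<in>{1..n}. y 0 i = 1"
    and y_step: "\<forall>t. \<forall>i\<in>{1..n}. y (Suc t) i = (\<Sum>j\<in>{1..n}. Wmat E i j * y t j)"
begin

lemma out_set: "{i. (j, i) \<in> E} \<subseteq> {1..n}" using E_sub by auto

lemma out_deg_pos: "j \<in> {1..n} \<Longrightarrow> out_deg E j \<ge> 1"
proof -
  assume j: "j \<in> {1..n}"
  have "finite {i. (j, i) \<in> E}" using out_set finite_subset by blast
  moreover have "j \<in> {i. (j, i) \<in> E}" using self_loops j by auto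
  ultimately show ?thesis unfolding out_deg_def
    by (metis One_nat_def Suc_leI card_gt_0_iff empty_iff)
qed

lemma out_deg_le: "out_deg E j \<le> n"
  unfolding out_deg_def using card_mono[OF _ out_set, of j] by simp

lemma W_nonneg: "Wmat E i j \<ge> 0" unfolding Wmat_def by simp

lemma W_diag: "i \<in> {1..n} \<Longrightarrow> Wmat E i i \<ge> 1 / real n"
proof -
  assume i: "i \<in> {1..n}"
  have "Wmat E i i = 1 / real (out_deg E i)" unfolding Wmat_def using self_loops i by auto
  moreover have "real (out_deg E i) \<le> real n" using out_deg_le by simp
  moreover have "real (out_deg E i) \<ge> 1" using out_deg_pos[OF i] by simp
  ultimately show ?thesis by (simp add: frac_le)
qed

lemma W_pos: "(j, i) \<in> E \<Longrightarrow> Wmat E i j > 0"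
proof -
  assume e: "(j, i) \<in> E"
  hence "j \<in> {1..n}" using E_sub by auto
  thus ?thesis unfolding Wmat_def using e out_deg_pos by fastforce
qed

lemma col_sum: "j \<in> {1..n} \<Longrightarrow> (\<Sum>i\<in>{1..n}. Wmat E i j) = 1"
proof -
  assume j: "j \<in> {1..n}"
  have "(\<Sum>i\<in>{1..n}. Wmat E i j) = (\<Sum>i\<in>{i\<in>{1..n}. (j, i) \<in> E}. 1 / real (out_deg E j))"
    unfolding Wmat_def by (simp add: sum.inter_filter[symmetric])
  also have "{i\<in>{1..n}. (j, i) \<in> E} = {i. (j, i) \<in> E}" using out_set[of j] by blast
  also have "(\<Sum>i\<in>{i. (j, i) \<in> E}. 1 / real (out_deg E j)) = 1"
    using out_deg_pos[OF j] unfolding out_deg_def by simp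
  finally show ?thesis .
qed

lemma y_pos: "\<forall>i\<in>{1..n}. y t i > 0"
proof (induction t)
  case 0 thus ?case using y0 by simp
next
  case (Suc t)
  show ?case
  proof
    fix i assume i: "i \<in> {1..n}"
    have "Wmat E i i * y t i \<le> (\<Sum>j\<in>{1..n}. Wmat E i j * y t j)"
    proof (rule member_le_sum)
      fix j assume "j \<in> {1..n} - {i}"
      hence "y t j > 0" using Suc.IH by blast
      thus "0 \<le> Wmat E i j * y t j" by (simp add: W_nonneg)
    qed (use i in auto)
    moreover have "Wmat E i i * y t i > 0"
      using W_diag[OF i] Suc i n_pos by (intro mult_pos_pos) (auto intro: less_le_trans[of 0 "1/real n"])
    ultimately show "y (Suc t) i > 0" using y_step i by auto
  qed
qed

lemma y_pos': "i \<in> {1..n} \<Longrightarrow> y t i > 0" using y_pos by blast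

lemma y_self: "i \<in> {1..n} \<Longrightarrow> y (Suc t) i \<ge> (1 / real n) * y t i"
proof -
  assume i: "i \<in> {1..n}"
  have "Wmat E i i * y t i \<le> (\<Sum>j\<in>{1..n}. Wmat E i j * y t j)"
    by (rule member_le_sum) (use i in \<open>auto intro!: mult_nonneg_nonneg W_nonneg less_imp_le[OF y_pos']\<close>)
  moreover have "(1 / real n) * y t i \<le> Wmat E i i * y t i"
    using W_diag[OF i] y_pos i by (intro mult_right_mono) (auto intro: less_imp_le)
  ultimately show ?thesis using y_step i by auto
qed

lemma y_self_iter: "i \<in> {1..n} \<Longrightarrow> y (t + r) i \<ge> (1 / real n) ^ r * y t i"
proof (induction r)
  case 0 thus ?case by simp
next
  case (Suc r)
  have "(1 / real n) ^ Suc r * y t i = (1 / real n) * ((1 / real n) ^ r * y t i)" by simp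
  also have "\<dots> \<le> (1 / real n) * y (t + r) i"
    using Suc by (intro mult_left_mono) auto
  also have "\<dots> \<le> y (Suc (t + r)) i" by (rule y_self[OF Suc.prems])
  finally show ?case by simp
qed

lemma y_sum: "(\<Sum>i\<in>{1..n}. y t i) = real n"
proof (induction t)
  case 0 thus ?case using y0 by simp
next
  case (Suc t)
  have "(\<Sum>i\<in>{1..n}. y (Suc t) i) = (\<Sum>i\<in>{1..n}. \<Sum>j\<in>{1..n}. Wmat E i j * y t j)"
    using y_step by simp
  also have "\<dots> = (\<Sum>j\<in>{1..n}. (\<Sum>i\<in>{1..n}. Wmat E i j) * y t j)"
    by (subst sum.swap) (simp add: sum_distrib_right)
  also have "\<dots> = (\<Sum>j\<in>{1..n}. y t j)" using col_sum by simp
  finally show ?case using Suc by simp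
qed

lemma path: "(j, i) \<in> E\<^sup>* \<Longrightarrow> i \<in> {1..n} \<Longrightarrow> \<exists>k c. c > 0 \<and> (\<forall>s. y (s + k) i \<ge> c * y s j)"
proof (induction arbitrary: rule: rtrancl_induct)
  case base
  show ?case by (intro exI[of _ 0] exI[of _ 1]) simp
next
  case (step m i)
  have m: "m \<in> {1..n}" using step.hyps(2) E_sub by auto
  obtain k c where kc: "c > 0" "\<forall>s. y (s + k) m \<ge> c * y s j" using step.IH[OF m] by blast
  show ?case
  proof (intro exI[of _ "Suc k"] exI[of _ "Wmat E i m * c"] conjI allI)
    show "Wmat E i m * c > 0" using W_pos[OF step.hyps(2)] kc by simp
    fix s
    have "Wmat E i m * y (s + k) m \<le> (\<Sum>l\<in>{1..n}. Wmat E i l * y (s + k) l)"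
      by (rule member_le_sum) (use m in \<open>auto intro!: mult_nonneg_nonneg W_nonneg less_imp_le[OF y_pos']\<close>)
    moreover have "Wmat E i m * c * y s j \<le> Wmat E i m * y (s + k) m"
      using kc W_nonneg by (simp add: mult.assoc mult_left_mono)
    ultimately show "Wmat E i m * c * y s j \<le> y (s + Suc k) i"
      using y_step step.prems by auto
  qed
qed

lemma extend:
  assumes i: "i \<in> {1..n}" and h: "\<forall>s. y (s + k) i \<ge> c * y s j" and c: "c > 0"
  shows "\<forall>s. y (s + (k + r)) i \<ge> (c * (1 / real n) ^ r) * y s j"
proof
  fix s
  have "(c * (1 / real n) ^ r) * y s j = (1 / real n) ^ r * (c * y s j)" by simp
  also have "\<dots> \<le> (1 / real n) ^ r * y (s + k) i" using h by (intro mult_left_mono) auto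
  also have "\<dots> \<le> y (s + k + r) i" by (rule y_self_iter[OF i])
  finally show "y (s + (k + r)) i \<ge> (c * (1 / real n) ^ r) * y s j" by (simp add: add.assoc)
qed

lemma uniform:
  assumes sc: "strongly_connected_on n E"
  shows "\<exists>K c. c > 0 \<and> (\<forall>i\<in>{1..n}. \<forall>j\<in>{1..n}. \<forall>s. y (s + K) i \<ge> c * y s j)"
proof -
  have "\<exists>K c. c > 0 \<and> (\<forall>(i, j)\<in>A. \<forall>s. y (s + K) i \<ge> c * y s j)" if "finite A" "A \<subseteq> {1..n} \<times> {1..n}" for A
    using that
  proof (induction A rule: finite_subset_induct')
    case empty show ?case by (intro exI[of _ 0] exI[of _ 1]) simp
  next
    case (insert ij A)
    obtain i j where ij: "ij = (i, j)" by (cases ij)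
    have i: "i \<in> {1..n}" and j: "j \<in> {1..n}" using insert.hyps(2) ij by auto
    obtain K1 c1 where k1: "c1 > 0" "\<forall>(i, j)\<in>A. \<forall>s. y (s + K1) i \<ge> c1 * y s j"
      using insert.IH by blast
    have "(j, i) \<in> E\<^sup>*" using sc i j unfolding strongly_connected_on_def by blast
    then obtain k2 c2 where k2: "c2 > 0" "\<forall>s. y (s + k2) i \<ge> c2 * y s j" using path i by blast
    define c where "c = min (c1 * (1 / real n) ^ k2) (c2 * (1 / real n) ^ K1)"
    have npos: "1 / real n > 0" using n_pos by simp
    have cpos: "c > 0" unfolding c_def using k1 k2 npos by simp
    show ?case
    proof (intro exI[of _ "K1 + k2"] exI[of _ c] conjI cpos ballI)
      fix x assume "x \<in> insert ij A"
      then consider "x = (i, j)" | "x \<in> A" using ij by auto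
      thus "case x of (i, j) \<Rightarrow> \<forall>s. c * y s j \<le> y (s + (K1 + k2)) i"
      proof cases
        case 1
        have e: "\<forall>s. y (s + (k2 + K1)) i \<ge> (c2 * (1 / real n) ^ K1) * y s j"
          by (rule extend[OF i k2(2) k2(1)])
        show ?thesis unfolding 1
        proof (simp, intro allI)
          fix s
          have "c * y s j \<le> (c2 * (1 / real n) ^ K1) * y s j"
            using less_imp_le[OF y_pos'[OF j]] unfolding c_def by (intro mult_right_mono) auto
          thus "c * y s j \<le> y (s + (K1 + k2)) i" using e[rule_format, of s] by (simp add: add.commute)
        qed
      next
        case 2
        obtain a b where ab: "x = (a, b)" by (cases x)
        have a: "a \<in> {1..n}" and b: "b \<in> {1..n}" using 2 ab insert.hyps(3) by auto
        have h: "\<forall>s. y (s + K1) a \<ge> c1 * y s b" using k1(2) 2 ab by auto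
        have e: "\<forall>s. y (s + (K1 + k2)) a \<ge> (c1 * (1 / real n) ^ k2) * y s b"
          by (rule extend[OF a h k1(1)])
        show ?thesis unfolding ab
        proof (simp, intro allI)
          fix s
          have "c * y s b \<le> (c1 * (1 / real n) ^ k2) * y s b"
            using less_imp_le[OF y_pos'[OF b]] unfolding c_def by (intro mult_right_mono) auto
          thus "c * y s b \<le> y (s + (K1 + k2)) a" using e[rule_format, of s] by simp
        qed
      qed
    qed
  qed
  from this[OF _ order_refl] show ?thesis by auto
qed

lemma y_lower:
  assumes sc: "strongly_connected_on n E"
  shows "\<exists>c>0. \<forall>t. \<forall>i\<in>{1..n}. y t i \<ge> c"
proof -
  obtain K c where Kc: "c > 0" "\<forall>i\<in>{1..n}. \<forall>j\<in>{1..n}. \<forall>s. y (s + K) i \<ge> c * y s j"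
    using uniform[OF sc] by blast
  have npos: "1 / real n > 0" using n_pos by simp
  have n1: "1 / real n \<le> 1" using n_pos by simp
  define c' where "c' = min c ((1 / real n) ^ K)"
  show ?thesis
  proof (intro exI[of _ c'] conjI allI ballI)
    show "c' > 0" unfolding c'_def using Kc npos by simp
    fix t i assume i: "i \<in> {1..n}"
    show "c' \<le> y t i"
    proof (cases "t < K")
      case True
      have "(1 / real n) ^ K \<le> (1 / real n) ^ t" using True npos n1 by (intro power_decreasing) auto
      also have "\<dots> = (1 / real n) ^ t * y 0 i" using y0 i by simp
      also have "\<dots> \<le> y (0 + t) i" by (rule y_self_iter[OF i])
      finally show ?thesis unfolding c'_def by simp
    next
      case False
      then obtain s where s: "t = s + K" by (metis add.commute le_add_diff_inverse not_less)
      have "real n * c = (\<Sum>j\<in>{1..n}. c * y s j) / 1" using y_sum[of s] by (simp add: sum_distrib_left[symmetric])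
      also have "(\<Sum>j\<in>{1..n}. c * y s j) \<le> (\<Sum>j\<in>{1..n}. y t i)"
        using Kc(2) i s by (intro sum_mono) auto
      finally have "real n * c \<le> real n * y t i" by simp
      hence "c \<le> y t i" using n_pos by simp
      thus ?thesis unfolding c'_def by simp
    qed
  qed
qed

end





theorem theorem4p2:
  fixes n :: nat and E :: "(nat \<times> nat) set" and p :: "nat \<Rightarrow> real"
    and fs :: "nat \<Rightarrow> 'a::euclidean_space \<Rightarrow> real" and g :: "nat \<Rightarrow> 'a \<Rightarrow> 'a"
    and Lc :: "nat \<Rightarrow> real" and \<beta> \<alpha> :: real and wstar :: 'a
    and w :: "nat \<Rightarrow> nat \<Rightarrow> 'a" and y :: "nat \<Rightarrow> nat \<Rightarrow> real" and t0 :: nat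
    and f :: "'a \<Rightarrow> real" and L \<gamma> \<sigma> \<delta> b c1 S D2 :: real
    and wbar :: "nat \<Rightarrow> 'a" and A B :: "nat \<Rightarrow> real"
  assumes f_def: "f =  (\<lambda>x. (1 / real n) * (\<Sum>i\<in>{1..n}. fs i x))"
    and L_def: "L = Max (Lc ` {1..n})"
    and gamma_def: "\<gamma> = \<beta> * L / (\<beta> + L)"
    and sigma_def: "\<sigma> = sigmaW n E p"
    and delta_def: "\<delta> = (SUP t. Max ((\<lambda>i. 1 / y t i) ` {1..n}))"
    and wbar_def: "wbar = (\<lambda>t. (1 / real n) *\<^sub>R (\<Sum>i\<in>{1..n}. w t i))"
    and A_def: "A = (\<lambda>t. norm (wbar t - wstar))"
    and B_def: "B = (\<lambda>t. pi_block_norm n p (\<lambda>i. w t i - (real n * p i) *\<^sub>R wbar t))"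
    and b_def: "b = real n * \<gamma> / (4 * L * \<delta>)"
    and c1_def: "c1 = pi_norm n p (\<lambda>i. 1 - real n * p i)"
    and S_def: "S = sqrt (\<Sum>j\<in>{1..n}. 1 / p j)"
    and D2_def: "D2 = L * \<delta> * c1 * norm wstar + pi_block_norm n p (\<lambda>i. g i wstar)"
    and n_pos: "n \<ge> 1"
    and E_sub: "E \<subseteq> {1..n} \<times> {1..n}"
    and self_loops: "\<forall>i\<in>{1..n}. (i, i) \<in> E"
    and strong_conn: "strongly_connected_on n E"
    and p_stat: "\<forall>i\<in>{1..n}. (\<Sum>j\<in>{1..n}. Wmat E i j * p j) = p i"
    and p_pos: "\<forall>i\<in>{1..n}. p i > 0"
    and p_sum: "(\<Sum>i\<in>{1..n}. p i) = 1"
    and grad: "\<forall>i\<in>{1..n}. \<forall>x. (fs i has_derivative (\<lambda>h. g i x \<bullet> h)) (at x)"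
    and F1: "\<forall>i\<in>{1..n}. Lc i > 0 \<and> (\<forall>x x'. norm (g i x - g i x') \<le> Lc i * norm (x - x'))"
    and F2: "\<beta> > 0" "strongly_convex \<beta> f"
    and wstar_min: "\<forall>x. f wstar \<le> f x"
    and alpha_pos: "\<alpha> > 0"
    and y0: "\<forall>i\<in>{1..n}. y 0 i = 1"
    and y_step: "\<forall>t. \<forall>i\<in>{1..n}. y (Suc t) i = (\<Sum>j\<in>{1..n}. Wmat E i j * y t j)"
    and w_step: "\<forall>t. \<forall>i\<in>{1..n}. w (Suc t) i =
        (\<Sum>j\<in>{1..n}. Wmat E i j *\<^sub>R (w t j - \<alpha> *\<^sub>R g j ((1 / y t j) *\<^sub>R w t j)))"
    and alpha_le: "\<alpha> \<le> 2 / (L + \<beta>)"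
    and alpha_lt: "\<alpha> * (L * \<sigma> * (\<delta> * b + \<delta> * c1 + S)) < b * (1 - \<sigma>)"
    and t0_def: "(L * \<delta> / real n) * c1 * \<sigma> ^ t0 \<le> \<gamma> / 2"
  shows "bdd_above (range A) \<and> bdd_above (range B) \<and>
    (let R = Max {A t0, B t0 / b, 2 * norm wstar,
                  \<sigma> * \<alpha> * D2 / (b * (1 - \<sigma>) - \<alpha> * L * \<sigma> * (\<delta> * b + \<delta> * c1 + S))}
     in \<forall>t\<ge>t0. A t \<le> R \<and> B t \<le> b * R)"
proof -
  interpret gpy n E y using n_pos E_sub self_loops y0 y_step by unfold_locales auto
  have p: "\<forall>i\<in>{1..n}. p i > 0" by (rule p_pos)
  have pI: "p i > 0" if "i \<in> {1..n}" for i using p that by blast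
  obtain cy where cy: "cy > 0" "\<forall>t. \<forall>i\<in>{1..n}. y t i \<ge> cy" using y_lower[OF strong_conn] by blast
  have yI: "y t i \<ge> cy" if "i \<in> {1..n}" for t i using cy that by blast
  have ypos: "y t i > 0" if "i \<in> {1..n}" for t i using y_pos' that by blast
  have nfin: "finite {1..n}" "{1..n} \<noteq> {}" using n_pos by auto
  have mx_le: "Max ((\<lambda>i. 1 / y t i) ` {1..n}) \<le> 1 / cy" for t
    using nfin cy yI by (subst Max_le_iff) (auto intro!: frac_le)
  have bddy: "bdd_above (range (\<lambda>t. Max ((\<lambda>i. 1 / y t i) ` {1..n})))"
    using mx_le by (intro bdd_aboveI) auto
  have invy: "1 / y t i \<le> \<delta>" if "i \<in> {1..n}" for t i
  proof -
    have "1 / y t i \<le> Max ((\<lambda>i. 1 / y t i) ` {1..n})" using nfin that by (intro Max_ge) auto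
    also have "\<dots> \<le> \<delta>" unfolding delta_def by (rule cSUP_upper[OF _ bddy]) simp
    finally show ?thesis .
  qed
  have d1: "\<delta> \<ge> 1" using invy[of 1 0] y0 n_pos by simp
  have LcL: "Lc i \<le> L" if "i \<in> {1..n}" for i unfolding L_def using nfin that by (intro Max_ge) auto
  have Lpos: "L > 0" using LcL[of 1] F1 n_pos by force
  have glip: "norm (g i x - g i x') \<le> L * norm (x - x')" if "i \<in> {1..n}" for i x x'
  proof -
    have "norm (g i x - g i x') \<le> Lc i * norm (x - x')" using F1 that by blast
    also have "\<dots> \<le> L * norm (x - x')" using LcL[OF that] by (intro mult_right_mono) auto
    finally show ?thesis .
  qed
  define G where "G = (\<lambda>x. (1 / real n) *\<^sub>R (\<Sum>i\<in>{1..n}. g i x))"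
  have fder: "(f has_derivative (\<lambda>h. G x \<bullet> h)) (at x)" for x
  proof -
    have "((\<lambda>x. \<Sum>i\<in>{1..n}. fs i x) has_derivative (\<lambda>h. \<Sum>i\<in>{1..n}. g i x \<bullet> h)) (at x)"
      by (rule has_derivative_sum) (use grad in auto)
    hence "((\<lambda>x. (1 / real n) * (\<Sum>i\<in>{1..n}. fs i x)) has_derivative (\<lambda>h. (1 / real n) * (\<Sum>i\<in>{1..n}. g i x \<bullet> h))) (at x)"
      by (rule has_derivative_mult_right)
    moreover have "(\<lambda>h. (1 / real n) * (\<Sum>i\<in>{1..n}. g i x \<bullet> h)) = (\<lambda>h. G x \<bullet> h)"
      unfolding G_def by (simp add: inner_sum_left)
    ultimately show ?thesis unfolding f_def by simp
  qed
  have Glip: "norm (G x - G x') \<le> L * norm (x - x')" for x x'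
  proof -
    have "G x - G x' = (1 / real n) *\<^sub>R (\<Sum>i\<in>{1..n}. g i x - g i x')"
      unfolding G_def by (simp add: sum_subtractf scaleR_diff_right)
    hence "norm (G x - G x') = (1 / real n) * norm (\<Sum>i\<in>{1..n}. g i x - g i x')" by simp
    also have "\<dots> \<le> (1 / real n) * (\<Sum>i\<in>{1..n}. L * norm (x - x'))"
      by (intro mult_left_mono order_trans[OF norm_sum sum_mono] glip) auto
    also have "\<dots> = L * norm (x - x')" using n_pos by simp
    finally show ?thesis .
  qed
  have UB: "\<And>x x'. f x' \<le> f x + G x \<bullet> (x' - x) + L / 2 * (norm (x' - x))\<^sup>2"
    by (rule descent[OF fder Glip])
  have LB: "\<And>x x'. f x' + G x' \<bullet> (x - x') + \<beta> / 2 * (norm (x - x'))\<^sup>2 \<le> f x"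
    by (rule sc_lower[OF fder F2(2)])
  have Gw: "G wstar = 0" by (rule grad_zero[OF UB Lpos]) (use wstar_min in auto)
  have contr: "norm (x - \<alpha> *\<^sub>R G x - wstar) \<le> (1 - \<alpha> * \<gamma>) * norm (x - wstar)" for x
    unfolding gamma_def by (rule contraction[OF UB LB F2(1) alpha_pos alpha_le Gw])
  have gpos: "\<gamma> > 0" unfolding gamma_def using F2(1) Lpos by simp
  have bpos: "b > 0" unfolding b_def using gpos Lpos d1 n_pos by simp
  have c1nn: "c1 \<ge> 0" unfolding c1_def by (rule pi_norm_nonneg[OF p])
  have Snn: "S \<ge> 0" unfolding S_def using p by (auto intro!: sum_nonneg)
  have snn: "\<sigma> \<ge> 0" unfolding sigma_def sigmaW_def by (rule op_norm_nonneg[OF p n_pos])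
  have Den: "b * (1 - \<sigma>) - \<alpha> * L * \<sigma> * (\<delta> * b + \<delta> * c1 + S) > 0"
    using alpha_lt by (simp add: mult.assoc)
  have slt1: "\<sigma> < 1"
  proof -
    have "0 \<le> \<alpha> * (L * \<sigma> * (\<delta> * b + \<delta> * c1 + S))"
      using alpha_pos Lpos snn d1 bpos c1nn Snn by (intro mult_nonneg_nonneg add_nonneg_nonneg) auto
    hence "b * (1 - \<sigma>) > 0" using alpha_lt by linarith
    thus ?thesis using bpos by (simp add: zero_less_mult_iff)
  qed
  have ag: "\<alpha> * \<gamma> \<le> 2"
  proof -
    have "\<gamma> \<le> L + \<beta>" unfolding gamma_def using F2(1) Lpos
      by (simp add: field_simps)
    have "\<alpha> * \<gamma> \<le> 2 / (L + \<beta>) * (L + \<beta>)"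
      using alpha_le \<open>\<gamma> \<le> L + \<beta>\<close> alpha_pos gpos by (intro mult_mono) auto
    moreover have "2 / (L + \<beta>) * (L + \<beta>) = 2" using Lpos F2(1) by (simp add: field_simps)
    ultimately show ?thesis by linarith
  qed
  define M where "M = (\<lambda>i j. Wmat E i j - p i)"
  have sigM: "\<sigma> = pi_op_norm n p M" unfolding sigma_def sigmaW_def M_def ..
  have opb: "pi_norm n p (mat_vec n M v) \<le> \<sigma> * pi_norm n p v" for v
    unfolding sigM by (rule op_norm_bound[OF p])
  have blk: "pi_block_norm n p (\<lambda>i. \<Sum>j\<in>{1..n}. M i j *\<^sub>R u j) \<le> \<sigma> * pi_block_norm n p u" for u :: "nat \<Rightarrow> 'a"
    unfolding sigM by (rule block_op[OF p n_pos])
  have Wp: "(\<Sum>j\<in>{1..n}. Wmat E i j * p j) = p i" if "i \<in> {1..n}" for i using p_stat that by blast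
  have Mp: "(\<Sum>j\<in>{1..n}. M i j * p j) = 0" if "i \<in> {1..n}" for i
    unfolding M_def using Wp[OF that] p_sum by (simp add: left_diff_distrib sum_subtractf sum_distrib_left[symmetric])
  have yerr: "pi_norm n p (\<lambda>i. y t i - real n * p i) \<le> \<sigma> ^ t * c1" for t
  proof (induction t)
    case 0
    have "pi_norm n p (\<lambda>i. y 0 i - real n * p i) = c1"
      unfolding c1_def by (rule pi_norm_cong) (use y0 in auto)
    thus ?case by simp
  next
    case (Suc t)
    have eq: "\<forall>i\<in>{1..n}. y (Suc t) i - real n * p i = mat_vec n M (\<lambda>j. y t j - real n * p j) i"
    proof
      fix i assume i: "i \<in> {1..n}"
      have "mat_vec n M (\<lambda>j. y t j - real n * p j) i = (\<Sum>j\<in>{1..n}. M i j * y t j) - real n * (\<Sum>j\<in>{1..n}. M i j * p j)"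
        unfolding mat_vec_def by (simp add: right_diff_distrib sum_subtractf sum_distrib_left algebra_simps)
      also have "(\<Sum>j\<in>{1..n}. M i j * y t j) = y (Suc t) i - p i * real n"
        unfolding M_def using y_step i y_sum[of t] by (simp add: left_diff_distrib sum_subtractf sum_distrib_left[symmetric])
      finally show "y (Suc t) i - real n * p i = mat_vec n M (\<lambda>j. y t j - real n * p j) i"
        using Mp[OF i] by simp
    qed
    have "pi_norm n p (\<lambda>i. y (Suc t) i - real n * p i) = pi_norm n p (mat_vec n M (\<lambda>j. y t j - real n * p j))"
      by (rule pi_norm_cong[OF eq])
    also have "\<dots> \<le> \<sigma> * pi_norm n p (\<lambda>j. y t j - real n * p j)" by (rule opb)
    also have "\<dots> \<le> \<sigma> * (\<sigma> ^ t * c1)" by (rule mult_left_mono[OF Suc snn])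
    finally show ?case by simp
  qed
  have spow: "\<sigma> ^ t \<le> 1" for t using snn slt1 by (simp add: power_le_one)
  have yerr1: "pi_norm n p (\<lambda>i. \<bar>real n * p i - y t i\<bar>) \<le> c1" for t
  proof -
    have "pi_norm n p (\<lambda>i. \<bar>real n * p i - y t i\<bar>) = pi_norm n p (\<lambda>i. y t i - real n * p i)"
      by (subst pi_norm_abs[symmetric]) (simp add: abs_minus_commute pi_norm_abs)
    also have "\<dots> \<le> \<sigma> ^ t * c1" by (rule yerr)
    also have "\<dots> \<le> 1 * c1" by (rule mult_right_mono[OF spow c1nn])
    finally show ?thesis by simp
  qed
  have ysum_err: "(\<Sum>i\<in>{1..n}. \<bar>real n * p i - y t i\<bar>) \<le> \<sigma> ^ t * c1" for t
  proof -
    have "(\<Sum>i\<in>{1..n}. \<bar>real n * p i - y t i\<bar>) = (\<Sum>i\<in>{1..n}. \<bar>y t i - real n * p i\<bar>)"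
      by (simp add: abs_minus_commute)
    also have "\<dots> \<le> pi_norm n p (\<lambda>i. y t i - real n * p i)" by (rule sum_abs_le_pi_norm[OF p p_sum])
    also have "\<dots> \<le> \<sigma> ^ t * c1" by (rule yerr)
    finally show ?thesis .
  qed
  have Ann: "A t \<ge> 0" for t unfolding A_def by simp
  have Bnn: "B t \<ge> 0" for t unfolding B_def by (rule pbn_nonneg[OF p])
  have steps: "(t \<ge> t0 \<longrightarrow> A (Suc t) \<le> (1 - \<alpha> * \<gamma> / 2) * A t + (\<alpha> * L * \<delta> / real n) * B t + (\<alpha> * \<gamma> / 2) * norm wstar)
     \<and> B (Suc t) \<le> \<sigma> * B t + \<alpha> * \<sigma> * L * (\<delta> * B t + (\<delta> * c1 + S) * A t) + \<sigma> * \<alpha> * D2" for t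
  proof -
    define wb where "wb = wbar t"
    define e where "e = (\<lambda>j. w t j - (real n * p j) *\<^sub>R wb)"
    define z where "z = (\<lambda>j. (1 / y t j) *\<^sub>R w t j)"
    define x where "x = (\<lambda>j. w t j - \<alpha> *\<^sub>R g j (z j))"
    define Sx where "Sx = (\<Sum>j\<in>{1..n}. x j)"
    have wS: "w (Suc t) i = (\<Sum>j\<in>{1..n}. Wmat E i j *\<^sub>R x j)" if "i \<in> {1..n}" for i
      using w_step that unfolding x_def z_def by blast
    have wbS: "wbar (Suc t) = (1 / real n) *\<^sub>R Sx"
    proof -
      have "(\<Sum>i\<in>{1..n}. w (Suc t) i) = (\<Sum>i\<in>{1..n}. \<Sum>j\<in>{1..n}. Wmat E i j *\<^sub>R x j)"
        using wS by simp
      also have "\<dots> = (\<Sum>j\<in>{1..n}. (\<Sum>i\<in>{1..n}. Wmat E i j) *\<^sub>R x j)"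
        by (subst sum.swap) (simp add: scaleR_sum_left)
      also have "\<dots> = Sx" unfolding Sx_def using col_sum by simp
      finally show ?thesis unfolding wbar_def by simp
    qed
    have Sx_eq: "Sx = real n *\<^sub>R wb - \<alpha> *\<^sub>R (\<Sum>j\<in>{1..n}. g j (z j))"
      unfolding Sx_def x_def wb_def wbar_def using n_pos
      by (simp add: sum_subtractf scaleR_sum_right)
    have wb_norm: "norm wb \<le> A t + norm wstar"
      unfolding A_def wb_def using norm_triangle_ineq[of "wbar t - wstar" wstar] by simp
    have At: "A t = norm (wb - wstar)" unfolding A_def wb_def ..
    have Bt: "B t = pi_block_norm n p e" unfolding B_def e_def wb_def ..
    have zb: "norm (z j - wb) \<le> \<delta> * (norm (e j) + \<bar>real n * p j - y t j\<bar> * norm wb)" if j: "j \<in> {1..n}" for j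
    proof -
      have yp: "y t j > 0" by (rule ypos[OF j])
      have "z j - wb = (1 / y t j) *\<^sub>R (e j + (real n * p j - y t j) *\<^sub>R wb)"
        unfolding z_def e_def using yp by (simp add: algebra_simps)
      hence "norm (z j - wb) = (1 / y t j) * norm (e j + (real n * p j - y t j) *\<^sub>R wb)"
        using yp by simp
      also have "\<dots> \<le> (1 / y t j) * (norm (e j) + \<bar>real n * p j - y t j\<bar> * norm wb)"
        using yp norm_triangle_ineq[of "e j" "(real n * p j - y t j) *\<^sub>R wb"] by (intro mult_left_mono) auto
      also have "\<dots> \<le> \<delta> * (norm (e j) + \<bar>real n * p j - y t j\<bar> * norm wb)"
        by (intro mult_right_mono invy[OF j]) auto
      finally show ?thesis .
    qed
    have sumz: "(\<Sum>j\<in>{1..n}. norm (z j - wb)) \<le> \<delta> * (B t + \<sigma> ^ t * c1 * norm wb)"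
    proof -
      have "(\<Sum>j\<in>{1..n}. norm (z j - wb)) \<le> (\<Sum>j\<in>{1..n}. \<delta> * (norm (e j) + \<bar>real n * p j - y t j\<bar> * norm wb))"
        by (rule sum_mono) (rule zb, simp)
      also have "\<dots> = \<delta> * ((\<Sum>j\<in>{1..n}. \<bar>norm (e j)\<bar>) + (\<Sum>j\<in>{1..n}. \<bar>real n * p j - y t j\<bar>) * norm wb)"
        by (simp add: sum_distrib_left sum_distrib_right sum.distrib distrib_left)
      also have "\<dots> \<le> \<delta> * (B t + \<sigma> ^ t * c1 * norm wb)"
      proof -
        have "(\<Sum>j\<in>{1..n}. \<bar>norm (e j)\<bar>) \<le> B t"
          unfolding Bt pbn_eq_pi_norm by (rule sum_abs_le_pi_norm[OF p p_sum])
        moreover have "(\<Sum>j\<in>{1..n}. \<bar>real n * p j - y t j\<bar>) * norm wb \<le> \<sigma> ^ t * c1 * norm wb"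
          by (intro mult_right_mono ysum_err) auto
        ultimately show ?thesis using d1 by (intro mult_left_mono) auto
      qed
      finally show ?thesis .
    qed
    have Astep: "A (Suc t) \<le> (1 - \<alpha> * \<gamma> / 2) * A t + (\<alpha> * L * \<delta> / real n) * B t + (\<alpha> * \<gamma> / 2) * norm wstar" if tt: "t \<ge> t0"
    proof -
      define D where "D = (\<Sum>j\<in>{1..n}. g j (z j) - g j wb)"
      have "(\<Sum>j\<in>{1..n}. g j (z j)) = real n *\<^sub>R G wb + D"
        unfolding D_def G_def using n_pos by (simp add: sum_subtractf)
      hence "wbar (Suc t) - wstar = (wb - \<alpha> *\<^sub>R G wb - wstar) - (\<alpha> / real n) *\<^sub>R D"
        unfolding wbS Sx_eq using n_pos by (simp add: algebra_simps)
      hence "A (Suc t) \<le> norm (wb - \<alpha> *\<^sub>R G wb - wstar) + norm ((\<alpha> / real n) *\<^sub>R D)"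
        unfolding A_def by (metis norm_triangle_ineq4)
      also have "\<dots> \<le> (1 - \<alpha> * \<gamma>) * A t + (\<alpha> / real n) * (L * (\<delta> * (B t + \<sigma> ^ t * c1 * norm wb)))"
      proof (intro add_mono)
        show "norm (wb - \<alpha> *\<^sub>R G wb - wstar) \<le> (1 - \<alpha> * \<gamma>) * A t" unfolding At by (rule contr)
        have "norm D \<le> (\<Sum>j\<in>{1..n}. norm (g j (z j) - g j wb))" unfolding D_def by (rule norm_sum)
        also have "\<dots> \<le> (\<Sum>j\<in>{1..n}. L * norm (z j - wb))" by (intro sum_mono glip) auto
        also have "\<dots> \<le> L * (\<delta> * (B t + \<sigma> ^ t * c1 * norm wb))"
          unfolding sum_distrib_left[symmetric] using Lpos sumz by (intro mult_left_mono) auto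
        finally have nD: "norm D \<le> L * (\<delta> * (B t + \<sigma> ^ t * c1 * norm wb))" .
        have "(\<alpha> / real n) * norm D \<le> (\<alpha> / real n) * (L * (\<delta> * (B t + \<sigma> ^ t * c1 * norm wb)))"
          using alpha_pos by (intro mult_left_mono[OF nD]) auto
        thus "norm ((\<alpha> / real n) *\<^sub>R D) \<le> (\<alpha> / real n) * (L * (\<delta> * (B t + \<sigma> ^ t * c1 * norm wb)))"
          using alpha_pos by simp
      qed
      also have "\<dots> = (1 - \<alpha> * \<gamma>) * A t + (\<alpha> * L * \<delta> / real n) * B t + \<alpha> * ((L * \<delta> / real n) * c1 * \<sigma> ^ t) * norm wb"
        by (simp add: algebra_simps)
      also have "\<dots> \<le> (1 - \<alpha> * \<gamma>) * A t + (\<alpha> * L * \<delta> / real n) * B t + \<alpha> * (\<gamma> / 2) * (A t + norm wstar)"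
      proof -
        have "\<sigma> ^ t \<le> \<sigma> ^ t0" using tt snn slt1 by (intro power_decreasing) auto
        hence "(L * \<delta> / real n) * c1 * \<sigma> ^ t \<le> (L * \<delta> / real n) * c1 * \<sigma> ^ t0"
          using Lpos d1 c1nn by (intro mult_left_mono) auto
        hence "(L * \<delta> / real n) * c1 * \<sigma> ^ t \<le> \<gamma> / 2" using t0_def by linarith
        hence "\<alpha> * ((L * \<delta> / real n) * c1 * \<sigma> ^ t) * norm wb \<le> \<alpha> * (\<gamma> / 2) * norm wb"
          using alpha_pos by (intro mult_right_mono mult_left_mono) auto
        also have "\<dots> \<le> \<alpha> * (\<gamma> / 2) * (A t + norm wstar)"
          using alpha_pos gpos wb_norm by (intro mult_left_mono) auto
        finally show ?thesis by simp
      qed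
      also have "\<dots> = (1 - \<alpha> * \<gamma> / 2) * A t + (\<alpha> * L * \<delta> / real n) * B t + (\<alpha> * \<gamma> / 2) * norm wstar"
        by (simp add: algebra_simps)
      finally show ?thesis .
    qed
    have Bstep: "B (Suc t) \<le> \<sigma> * B t + \<alpha> * \<sigma> * L * (\<delta> * B t + (\<delta> * c1 + S) * A t) + \<sigma> * \<alpha> * D2"
    proof -
      have Bvec: "\<forall>i\<in>{1..n}. w (Suc t) i - (real n * p i) *\<^sub>R wbar (Suc t) = (\<Sum>j\<in>{1..n}. M i j *\<^sub>R (e j - \<alpha> *\<^sub>R g j (z j)))"
      proof
        fix i assume i: "i \<in> {1..n}"
        have ex: "e j - \<alpha> *\<^sub>R g j (z j) = x j - (real n * p j) *\<^sub>R wb" for j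
          unfolding e_def x_def by (simp add: algebra_simps)
        have "(\<Sum>j\<in>{1..n}. M i j *\<^sub>R (e j - \<alpha> *\<^sub>R g j (z j))) = (\<Sum>j\<in>{1..n}. M i j *\<^sub>R x j) - (\<Sum>j\<in>{1..n}. (M i j * (real n * p j)) *\<^sub>R wb)"
          unfolding ex by (simp add: scaleR_diff_right sum_subtractf)
        also have "(\<Sum>j\<in>{1..n}. (M i j * (real n * p j)) *\<^sub>R wb) = (real n * (\<Sum>j\<in>{1..n}. M i j * p j)) *\<^sub>R wb"
          by (simp add: scaleR_sum_left[symmetric] sum_distrib_left algebra_simps)
        also have "\<dots> = 0" using Mp[OF i] by simp
        also have "(\<Sum>j\<in>{1..n}. M i j *\<^sub>R x j) = w (Suc t) i - p i *\<^sub>R Sx"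
          unfolding M_def wS[OF i] Sx_def by (simp add: scaleR_left_diff_distrib sum_subtractf scaleR_sum_right)
        also have "p i *\<^sub>R Sx = (real n * p i) *\<^sub>R wbar (Suc t)" unfolding wbS using n_pos by simp
        finally show "w (Suc t) i - (real n * p i) *\<^sub>R wbar (Suc t) = (\<Sum>j\<in>{1..n}. M i j *\<^sub>R (e j - \<alpha> *\<^sub>R g j (z j)))"
          by simp
      qed
      have B1: "B (Suc t) \<le> \<sigma> * pi_block_norm n p (\<lambda>j. e j - \<alpha> *\<^sub>R g j (z j))"
        unfolding B_def by (subst pbn_cong[OF Bvec]) (rule blk)
      have B2: "pi_block_norm n p (\<lambda>j. e j - \<alpha> *\<^sub>R g j (z j)) \<le> B t + \<alpha> * pi_block_norm n p (\<lambda>j. g j (z j))"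
      proof -
        have "pi_block_norm n p (\<lambda>j. e j - \<alpha> *\<^sub>R g j (z j)) = pi_block_norm n p (\<lambda>j. e j + (- \<alpha>) *\<^sub>R g j (z j))" by simp
        also have "\<dots> \<le> pi_block_norm n p e + pi_block_norm n p (\<lambda>j. (- \<alpha>) *\<^sub>R g j (z j))" by (rule pbn_add[OF p])
        also have "\<dots> = B t + \<alpha> * pi_block_norm n p (\<lambda>j. g j (z j))"
          unfolding Bt pbn_scale[OF p] using alpha_pos by simp
        finally show ?thesis .
      qed
      have zw: "pi_block_norm n p (\<lambda>j. z j - wb) \<le> \<delta> * (B t + (A t + norm wstar) * c1)"
      proof -
        have "pi_block_norm n p (\<lambda>j. z j - wb) \<le> pi_norm n p (\<lambda>j. \<delta> * (norm (e j) + \<bar>real n * p j - y t j\<bar> * norm wb))"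
          by (rule pbn_le_pi_norm[OF p]) (use zb in auto)
        also have "\<dots> = \<delta> * pi_norm n p (\<lambda>j. norm (e j) + norm wb * \<bar>real n * p j - y t j\<bar>)"
          using pi_norm_scale[OF p, of \<delta>] d1 by (simp add: mult.commute)
        also have "\<dots> \<le> \<delta> * (B t + norm wb * c1)"
        proof (intro mult_left_mono)
          have "pi_norm n p (\<lambda>j. norm (e j) + norm wb * \<bar>real n * p j - y t j\<bar>) \<le> pi_norm n p (\<lambda>j. norm (e j)) + pi_norm n p (\<lambda>j. norm wb * \<bar>real n * p j - y t j\<bar>)"
            by (rule pi_norm_add[OF p])
          also have "pi_norm n p (\<lambda>j. norm wb * \<bar>real n * p j - y t j\<bar>) = norm wb * pi_norm n p (\<lambda>j. \<bar>real n * p j - y t j\<bar>)"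
            by (simp add: pi_norm_scale[OF p])
          also have "\<dots> \<le> norm wb * c1" by (intro mult_left_mono yerr1) auto
          finally show "pi_norm n p (\<lambda>j. norm (e j) + norm wb * \<bar>real n * p j - y t j\<bar>) \<le> B t + norm wb * c1"
            unfolding Bt pbn_eq_pi_norm by simp
        qed (use d1 in simp)
        also have "\<dots> \<le> \<delta> * (B t + (A t + norm wstar) * c1)"
          using d1 c1nn wb_norm by (intro mult_left_mono add_left_mono mult_right_mono) auto
        finally show ?thesis .
      qed
      have gz: "pi_block_norm n p (\<lambda>j. g j (z j)) \<le> L * (\<delta> * (B t + (A t + norm wstar) * c1) + A t * S) + pi_block_norm n p (\<lambda>j. g j wstar)"
      proof -
        have "pi_block_norm n p (\<lambda>j. g j (z j)) = pi_block_norm n p (\<lambda>j. (g j (z j) - g j wstar) + g j wstar)" by simp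
        also have "\<dots> \<le> pi_block_norm n p (\<lambda>j. g j (z j) - g j wstar) + pi_block_norm n p (\<lambda>j. g j wstar)"
          by (rule pbn_add[OF p])
        also have "pi_block_norm n p (\<lambda>j. g j (z j) - g j wstar) \<le> L * (\<delta> * (B t + (A t + norm wstar) * c1) + A t * S)"
        proof -
          have "pi_block_norm n p (\<lambda>j. g j (z j) - g j wstar) \<le> pi_norm n p (\<lambda>j. L * norm (z j - wstar))"
            by (rule pbn_le_pi_norm[OF p]) (use glip in auto)
          also have "\<dots> = L * pi_block_norm n p (\<lambda>j. z j - wstar)"
            using pi_norm_scale[OF p, of L] Lpos by (simp add: pbn_eq_pi_norm)
          finally have g1: "pi_block_norm n p (\<lambda>j. g j (z j) - g j wstar) \<le> L * pi_block_norm n p (\<lambda>j. z j - wstar)" .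
          have "pi_block_norm n p (\<lambda>j. z j - wstar) \<le> pi_block_norm n p (\<lambda>j. z j - wb) + pi_block_norm n p (\<lambda>j. wb - wstar)"
            using pbn_add[OF p, of "\<lambda>j. z j - wb" "\<lambda>j. wb - wstar"] by simp
          also have "pi_block_norm n p (\<lambda>j. wb - wstar) = A t * S"
            unfolding pbn_const[OF p] At S_def ..
          finally have "pi_block_norm n p (\<lambda>j. z j - wstar) \<le> \<delta> * (B t + (A t + norm wstar) * c1) + A t * S"
            using zw by linarith
          hence "L * pi_block_norm n p (\<lambda>j. z j - wstar) \<le> L * (\<delta> * (B t + (A t + norm wstar) * c1) + A t * S)"
            using Lpos by (intro mult_left_mono) auto
          with g1 show ?thesis by linarith
        qed
        finally show ?thesis by simp
      qed
      have "B (Suc t) \<le> \<sigma> * (B t + \<alpha> * (L * (\<delta> * (B t + (A t + norm wstar) * c1) + A t * S) + pi_block_norm n p (\<lambda>j. g j wstar)))"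
        using B1 B2 gz snn alpha_pos
        by (meson add_left_mono mult_left_mono order_trans less_imp_le)
      also have "\<dots> = \<sigma> * B t + \<alpha> * \<sigma> * L * (\<delta> * B t + (\<delta> * c1 + S) * A t) + \<sigma> * \<alpha> * D2"
        unfolding D2_def by (simp add: algebra_simps)
      finally show ?thesis .
    qed
    show ?thesis using Astep Bstep by blast
  qed
  define Dn where "Dn = b * (1 - \<sigma>) - \<alpha> * L * \<sigma> * (\<delta> * b + \<delta> * c1 + S)"
  define R where "R = Max {A t0, B t0 / b, 2 * norm wstar, \<sigma> * \<alpha> * D2 / Dn}"
  have Rge: "A t0 \<le> R" "B t0 / b \<le> R" "2 * norm wstar \<le> R" "\<sigma> * \<alpha> * D2 / Dn \<le> R"
    unfolding R_def by (intro Max_ge; simp)+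
  have Dnp: "Dn > 0" unfolding Dn_def by (rule Den)
  have Rnn: "R \<ge> 0" using Rge(1) Ann[of t0] by linarith
  have bL: "(\<alpha> * L * \<delta> / real n) * b = \<alpha> * \<gamma> / 4"
    unfolding b_def using Lpos d1 n_pos by (simp add: field_simps)
  have inv: "A (t0 + k) \<le> R \<and> B (t0 + k) \<le> b * R" for k
  proof (induction k)
    case 0
    have "B t0 \<le> b * R" using Rge(2) bpos by (simp add: divide_le_eq mult.commute)
    thus ?case using Rge(1) by simp
  next
    case (Suc k)
    define t where "t = t0 + k"
    have At: "A t \<le> R" and Bt: "B t \<le> b * R" using Suc unfolding t_def by auto
    have st: "A (Suc t) \<le> (1 - \<alpha> * \<gamma> / 2) * A t + (\<alpha> * L * \<delta> / real n) * B t + (\<alpha> * \<gamma> / 2) * norm wstar"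
      "B (Suc t) \<le> \<sigma> * B t + \<alpha> * \<sigma> * L * (\<delta> * B t + (\<delta> * c1 + S) * A t) + \<sigma> * \<alpha> * D2"
      using steps[of t] unfolding t_def by auto
    have c0: "0 \<le> \<alpha> * L * \<delta> / real n" using alpha_pos Lpos d1 by simp
    have "A (Suc t) \<le> (1 - \<alpha> * \<gamma> / 2) * R + (\<alpha> * L * \<delta> / real n) * (b * R) + (\<alpha> * \<gamma> / 2) * (R / 2)"
    proof -
      have "(1 - \<alpha> * \<gamma> / 2) * A t \<le> (1 - \<alpha> * \<gamma> / 2) * R" using ag At by (intro mult_left_mono) auto
      moreover have "(\<alpha> * L * \<delta> / real n) * B t \<le> (\<alpha> * L * \<delta> / real n) * (b * R)" using c0 Bt by (intro mult_left_mono) auto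
      moreover have "(\<alpha> * \<gamma> / 2) * norm wstar \<le> (\<alpha> * \<gamma> / 2) * (R / 2)" using alpha_pos gpos Rge(3) by (intro mult_left_mono) auto
      ultimately show ?thesis using st(1) by linarith
    qed
    also have "\<dots> = R"
    proof -
      have "(\<alpha> * L * \<delta> / real n) * (b * R) = (\<alpha> * \<gamma> / 4) * R" using bL by (metis mult.assoc)
      thus ?thesis by (simp add: algebra_simps)
    qed
    finally have A1: "A (Suc t) \<le> R" .
    have "B (Suc t) \<le> \<sigma> * (b * R) + \<alpha> * \<sigma> * L * (\<delta> * (b * R) + (\<delta> * c1 + S) * R) + \<sigma> * \<alpha> * D2"
    proof -
      have "\<sigma> * B t \<le> \<sigma> * (b * R)" using snn Bt by (intro mult_left_mono) auto
      moreover have "\<alpha> * \<sigma> * L * (\<delta> * B t + (\<delta> * c1 + S) * A t) \<le> \<alpha> * \<sigma> * L * (\<delta> * (b * R) + (\<delta> * c1 + S) * R)"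
        using alpha_pos snn Lpos d1 c1nn Snn At Bt
        by (intro mult_left_mono add_mono mult_nonneg_nonneg) auto
      ultimately show ?thesis using st(2) by linarith
    qed
    also have "\<dots> = b * R - R * Dn + \<sigma> * \<alpha> * D2" unfolding Dn_def by (simp add: algebra_simps)
    also have "\<dots> \<le> b * R"
    proof -
      have "\<sigma> * \<alpha> * D2 \<le> R * Dn" using Rge(4) Dnp by (simp add: divide_le_eq)
      thus ?thesis by simp
    qed
    finally have B1: "B (Suc t) \<le> b * R" .
    show ?case using A1 B1 unfolding t_def by simp
  qed
  have invt: "A t \<le> R \<and> B t \<le> b * R" if "t \<ge> t0" for t
    using inv[of "t - t0"] that by simp
  have bddA: "bdd_above (range A)"
  proof (rule bdd_aboveI)
    fix x assume "x \<in> range A"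
    then obtain t where x: "x = A t" by blast
    show "x \<le> max R (Max (A ` {..t0}))"
    proof (cases "t \<ge> t0")
      case True thus ?thesis using invt x by fastforce
    next
      case False
      hence "A t \<le> Max (A ` {..t0})" by (intro Max_ge) auto
      thus ?thesis using x by simp
    qed
  qed
  have bddB: "bdd_above (range B)"
  proof (rule bdd_aboveI)
    fix x assume "x \<in> range B"
    then obtain t where x: "x = B t" by blast
    show "x \<le> max (b * R) (Max (B ` {..t0}))"
    proof (cases "t \<ge> t0")
      case True thus ?thesis using invt x by fastforce
    next
      case False
      hence "B t \<le> Max (B ` {..t0})" by (intro Max_ge) auto
      thus ?thesis using x by simp
    qed
  qed
  have RR: "Max {A t0, B t0 / b, 2 * norm wstar, \<sigma> * \<alpha> * D2 / (b * (1 - \<sigma>) - \<alpha> * L * \<sigma> * (\<delta> * b + \<delta> * c1 + S))} = R"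
    unfolding R_def Dn_def ..
  show ?thesis unfolding Let_def RR using bddA bddB invt by blast
qed



end
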